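(* In the linear setting of the context, suppose $f(\phi_{\min})<0$. Then for every $A>0$ and every $Q_A\in\mathbb R$, setting $z=Q_A/A$, the linear pump-leak system has a unique steady state $(\mathbf c^*,v^*,\phi^* )$; the map $(A,Q_A)\mapsto v^*$ is $C^1$ on $(0,\infty)\times\mathbb R$ and $$\frac{\partial v^*}{\partial A}=\Big(\big(\tfrac{Q_A}{v^*}\big)^2+f''(\phi^* )\tfrac{A}{v^*}\Big)^{-1}f''(\phi^* )>0,\qquad \frac{\partial v^*}{\partial Q_A}=\Big(\big(\tfrac{Q_A}{v^*}\big)^2+f''(\phi^* )\tfrac{A}{v^*}\Big)^{-1}\frac{Q_A}{v^*}.$$
   Context: Fix an integer $N\ge2$, real valences $z_1,\dots,z_N$ not all zero, positive constants $c_1^{\rm e},\dots,c_N^{\rm e}$ with $\sum_kz_kc_k^{\rm e}=0$. Let $L$ be a real symmetric positive definite $N\times N$ matrix, $\mathbf p\in\mathbb R^N$ constant, $\zeta>0$, $\mathbf q=L^{-1}\mathbf p$, and $f(\phi)=\sum_k c_k^{\rm e}(\exp(-q_k-z_k\phi)-1)$, which has a unique minimizer $\phi_{\min}$ on $\mathbb R$. For $A>0$ and real $z$, and $\mathbf c\in(0,\infty)^N$, $v>0$, $\phi\in\mathbb R$, set $\mu_k=\ln(c_k/c_k^{\rm e})+z_k\phi$, $\pi_{\rm w}=\sum_kc_k^{\rm e}-(\sum_kc_k+A/v)$. The linear pump-leak system is $\frac{d}{dt}(v\mathbf c)=-L\boldsymbol\mu-\mathbf p$, $0=\sum_kz_kc_k+zA/v$,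 $\frac{dv}{dt}=-\zeta\pi_{\rm w}$; a steady state is a point $(\mathbf c,v,\phi)\in(0,\infty)^N\times(0,\infty)\times\mathbb R$ with $\sum_kz_kc_k+zA/v=0$, $L\boldsymbol\mu+\mathbf p=0$, $\pi_{\rm w}=0$. *)

theory Defs
  imports "HOL-Analysis.Analysis"
begin

text \<open>Linear pump-leak model. Species are indexed by a finite type 'n (N = CARD('n)).
  zv = valences z_k, ce = external concentrations c_k^e, L the leak matrix, p the pump vector.\<close>

definition mu :: "real^'n \<Rightarrow> real^'n \<Rightarrow> real^'n \<Rightarrow> real \<Rightarrow> real^'n" where
  "mu zv ce c \<phi> = (\<chi> k. ln (c$k / ce$k) + zv$k * \<phi>)"

definition pi_w :: "real^'n \<Rightarrow> real^'n \<Rightarrow> real \<Rightarrow> real \<Rightarrow> real" where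
  "pi_w ce c A v = (\<Sum>k\<in>UNIV. ce$k) - ((\<Sum>k\<in>UNIV. c$k) + A / v)"

definition steady_state ::
  "real^'n \<Rightarrow> real^'n \<Rightarrow> real^'n^'n \<Rightarrow> real^'n \<Rightarrow> real \<Rightarrow> real \<Rightarrow> real^'n \<Rightarrow> real \<Rightarrow> real \<Rightarrow> bool" where
  "steady_state zv ce L p A z c v \<phi> \<longleftrightarrow>
     (\<forall>k. c$k > 0) \<and> v > 0 \<and>
     (\<Sum>k\<in>UNIV. zv$k * c$k) + z * A / v = 0 \<and>
     L *v mu zv ce c \<phi> + p = 0 \<and>
     pi_w ce c A v = 0"

definition fpl :: "real^'n \<Rightarrow> real^'n \<Rightarrow> real^'n^'n \<Rightarrow> real^'n \<Rightarrow> real \<Rightarrow> real" where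
  "fpl zv ce L p \<phi> = (\<Sum>k\<in>UNIV. ce$k * (exp (- (matrix_inv L *v p)$k - zv$k * \<phi>) - 1))"

definition phi_min :: "real^'n \<Rightarrow> real^'n \<Rightarrow> real^'n^'n \<Rightarrow> real^'n \<Rightarrow> real" where
  "phi_min zv ce L p = (THE \<phi>. \<forall>\<psi>. fpl zv ce L p \<phi> \<le> fpl zv ce L p \<psi>)"

definition vstar :: "real^'n \<Rightarrow> real^'n \<Rightarrow> real^'n^'n \<Rightarrow> real^'n \<Rightarrow> real \<Rightarrow> real \<Rightarrow> real" where
  "vstar zv ce L p A QA = (THE v. \<exists>c \<phi>. steady_state zv ce L p A (QA / A) c v \<phi>)"

definition phistar :: "real^'n \<Rightarrow> real^'n \<Rightarrow> real^'n^'n \<Rightarrow> real^'n \<Rightarrow> real \<Rightarrow> real \<Rightarrow> real" where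
  "phistar zv ce L p A QA = (THE \<phi>. \<exists>c v. steady_state zv ce L p A (QA / A) c v \<phi>)"

end

theory Submission
  imports Defs
begin

locale cvx =
  fixes f f1 f2 :: "real \<Rightarrow> real" and x0 :: real
  assumes d0: "\<And>x. (f has_real_derivative f1 x) (at x)"
    and d1: "\<And>x. (f1 has_real_derivative f2 x) (at x)"
    and pos: "\<And>x. f2 x > 0"
    and neg: "f x0 < 0"
    and lft: "\<exists>l<x0. f l \<ge> 0" and rgt: "\<exists>r>x0. f r \<ge> 0"
begin

lemma contf: "isCont f x" using d0 DERIV_isCont by blast
lemma contf1: "isCont f1 x" using d1 DERIV_isCont by blast
lemma contf2: "continuous_on S f" using contf by (simp add: continuous_at_imp_continuous_on)
lemma contf12: "continuous_on S f1" using contf1 by (simp add: continuous_at_imp_continuous_on)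

lemma mono1: "x < y \<Longrightarrow> f1 x < f1 y"
  by (rule DERIV_pos_imp_increasing) (use d1 pos in blast)+

lemma below_max: assumes "x < t" "t < y" shows "f t < max (f x) (f y)"
proof (rule ccontr)
  assume "\<not> ?thesis"
  hence h: "f t \<ge> f x" "f t \<ge> f y" by auto
  obtain u where u: "x < u" "u < t" "f t - f x = (t - x) * f1 u"
    using MVT2[OF assms(1), of f f1] d0 by blast
  obtain w where w: "t < w" "w < y" "f y - f t = (y - t) * f1 w"
    using MVT2[OF assms(2), of f f1] d0 by blast
  have "f1 u \<ge> 0" using u h assms by (metis diff_ge_0_iff_ge zero_le_mult_iff diff_gt_0_iff_gt not_le)
  moreover have "f1 w \<le> 0" using w h assms by (metis diff_le_0_iff_le mult_le_0_iff diff_gt_0_iff_gt not_le)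
  moreover have "f1 u < f1 w" using mono1 u w by simp
  ultimately show False by simp
qed

lemma roots: "\<exists>a b. a < x0 \<and> x0 < b \<and> f a = 0 \<and> f b = 0 \<and> f1 a < 0 \<and> f1 b > 0"
proof -
  obtain l where l: "l < x0" "f l \<ge> 0" using lft by blast
  obtain r where r: "r > x0" "f r \<ge> 0" using rgt by blast
  obtain a where a: "l \<le> a" "a \<le> x0" "f a = 0"
    using IVT2'[of f x0 0 l] l neg contf2 by auto
  obtain b where b: "x0 \<le> b" "b \<le> r" "f b = 0"
    using IVT'[of f x0 0 r] r neg contf2 by auto
  have a1: "a < x0" using a neg by (metis order.order_iff_strict less_irrefl)
  have b1: "x0 < b" using b neg by (metis order.order_iff_strict less_irrefl)
  obtain u where u: "a < u" "u < x0" "f x0 - f a = (x0 - a) * f1 u"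
    using MVT2[OF a1, of f f1] d0 by blast
  have "f1 u < 0" using u a neg a1 by (simp add: mult_less_0_iff)
  hence fa: "f1 a < 0" using mono1[OF u(1)] by simp
  obtain w where w: "x0 < w" "w < b" "f b - f x0 = (b - x0) * f1 w"
    using MVT2[OF b1, of f f1] d0 by blast
  have "(b - x0) * f1 w > 0" using w b neg by simp
  hence "f1 w > 0" using b1 by (simp add: zero_less_mult_iff)
  hence fb: "f1 b > 0" using mono1[OF w(2)] by simp
  show ?thesis using a1 b1 a b fa fb by blast
qed

lemma exist: "\<exists>t. f t < 0 \<and> f1 t + z * f t = 0"
proof -
  obtain a b where ab: "a < x0" "x0 < b" "f a = 0" "f b = 0" "f1 a < 0" "f1 b > 0"
    using roots by blast
  have c: "continuous_on {a..b} (\<lambda>t. f1 t + z * f t)"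
    by (intro continuous_intros contf2 contf12)
  obtain t where t: "a \<le> t" "t \<le> b" "f1 t + z * f t = 0"
    using IVT'[of "\<lambda>t. f1 t + z * f t" a 0 b, OF _ _ _ c] ab by auto
  have "t \<noteq> a" "t \<noteq> b" using t ab by auto
  hence "a < t" "t < b" using t by auto
  hence "f t < 0" using below_max[of a t b] ab by simp
  thus ?thesis using t by blast
qed

lemma uniq_aux:
  assumes st: "s < t" and fs: "f s < 0" and ft: "f t < 0"
    and rs: "f1 s + z * f s = 0" and rt: "f1 t + z * f t = 0"
  shows False
proof -
  have neg_on: "f u < 0" if "s \<le> u" "u \<le> t" for u
  proof (cases "u = s \<or> u = t")
    case True thus ?thesis using fs ft by auto
  next
    case False thus ?thesis using below_max[of s u t] that fs ft by auto
  qed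
  have der: "((\<lambda>u. f1 u / f u) has_real_derivative
      ((f2 u * f u - f1 u * f1 u) / (f u * f u))) (at u)" if "s \<le> u" "u \<le> t" for u
    using DERIV_divide[OF d1 d0, of u] neg_on[OF that] by simp
  obtain u where u: "s < u" "u < t"
    "f1 t / f t - f1 s / f s = (t - s) * ((f2 u * f u - f1 u * f1 u) / (f u * f u))"
    using MVT2[OF st der] by blast
  have fu: "f u < 0" using neg_on u by auto
  have e1: "f1 t / f t = -z" using rt ft by (simp add: field_simps)
  have e2: "f1 s / f s = -z" using rs fs by (simp add: field_simps)
  have "f2 u * f u - f1 u * f1 u < 0"
    using pos[of u] fu by (smt (verit) mult_pos_neg zero_le_square)
  moreover have "f u * f u > 0" using fu by (simp add: mult_neg_neg)
  ultimately have "(f2 u * f u - f1 u * f1 u) / (f u * f u) < 0" by (simp add: divide_neg_pos)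
  hence hlt: "(t - s) * ((f2 u * f u - f1 u * f1 u) / (f u * f u)) < 0" using st using st mult_pos_neg[of "t - s"] by (metis diff_gt_0_iff_gt)
  have "(t - s) * ((f2 u * f u - f1 u * f1 u) / (f u * f u)) = 0"
    using u(3) unfolding e1 e2 by (metis diff_self)
  thus False using hlt by (metis less_irrefl)
qed

lemma uniq:
  assumes "f s < 0" "f t < 0" "f1 s + z * f s = 0" "f1 t + z * f t = 0"
  shows "s = t"
  using uniq_aux[of s t z] uniq_aux[of t s z] assms by (cases s t rule: linorder_cases) auto

definition Phi :: "real \<Rightarrow> real" where
  "Phi z = (THE t. f t < 0 \<and> f1 t + z * f t = 0)"

lemma Phi: "f (Phi z) < 0 \<and> f1 (Phi z) + z * f (Phi z) = 0"
  unfolding Phi_def by (rule theI') (use exist uniq in blast)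

lemma Phi_eq: "f t < 0 \<Longrightarrow> f1 t + z * f t = 0 \<Longrightarrow> Phi z = t"
  using Phi uniq by blast

definition k :: "real \<Rightarrow> real" where "k t = - f1 t / f t"

lemma k_Phi: "k (Phi z) = z"
  using Phi[of z] unfolding k_def by (simp add: field_simps)

lemma Phi_k: "f t < 0 \<Longrightarrow> Phi (k t) = t"
  by (rule Phi_eq) (auto simp: k_def field_simps)

lemma isCont_Phi: "isCont Phi z"
proof -
  let ?x = "Phi z"
  have fx: "f ?x < 0" using Phi[of z] by simp
  have "eventually (\<lambda>u. f u < 0) (at ?x)"
    using order_tendstoD(2)[OF contf[of ?x, unfolded isCont_def] fx] .
  then obtain e where e: "e > 0" "\<And>u. u \<noteq> ?x \<Longrightarrow> dist u ?x < e \<Longrightarrow> f u < 0"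
    unfolding eventually_at by blast
  have fn: "f u < 0" if "\<bar>u - ?x\<bar> \<le> e/2" for u
    using e that fx by (cases "u = ?x") (auto simp: dist_real_def)
  have "isCont Phi (k ?x)"
  proof (rule isCont_inverse_function[where d="e/2" and f=k and g=Phi and x="?x"])
    show "0 < e/2" using e by simp
    show "Phi (k u) = u" if "\<bar>u - ?x\<bar> \<le> e/2" for u using Phi_k fn that by blast
    show "isCont k u" if "\<bar>u - ?x\<bar> \<le> e/2" for u
      unfolding k_def using fn[OF that] by (intro continuous_intros contf contf1) auto
  qed
  thus ?thesis using k_Phi by simp
qed

definition kd :: "real \<Rightarrow> real" where
  "kd t = - ((f2 t * f t - f1 t * f1 t) / (f t * f t))"

lemma kd_pos: "f t < 0 \<Longrightarrow> kd t > 0"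
proof -
  assume fu: "f t < 0"
  have "f2 t * f t - f1 t * f1 t < 0"
    using pos[of t] fu by (smt (verit) mult_pos_neg zero_le_square)
  moreover have "f t * f t > 0" using fu by (simp add: mult_neg_neg)
  ultimately show ?thesis unfolding kd_def by (simp add: divide_neg_pos)
qed

lemma DERIV_Phi: "(Phi has_real_derivative inverse (kd (Phi z))) (at z)"
proof (rule DERIV_inverse_function[where a = "z - 1" and b = "z + 1"])
  have "f (Phi z) \<noteq> 0" using Phi[of z] by simp
  hence h: "((\<lambda>t. f1 t / f t) has_real_derivative
     (f2 (Phi z) * f (Phi z) - f1 (Phi z) * f1 (Phi z)) / (f (Phi z) * f (Phi z))) (at (Phi z))"
    by (rule DERIV_divide[OF d1 d0])
  have kk: "k = (\<lambda>t. - (f1 t / f t))" unfolding k_def by (rule ext) simp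
  show "(k has_real_derivative kd (Phi z)) (at (Phi z))"
    unfolding kk kd_def by (rule DERIV_minus[OF h])
  show "kd (Phi z) \<noteq> 0" using kd_pos Phi by (metis less_irrefl)
  show "k (Phi y) = y" for y by (rule k_Phi)
  show "isCont Phi z" by (rule isCont_Phi)
qed auto

end

lemma alg:
  fixes f f1 f2 A Q h k :: real
  assumes f: "f < 0" and f2: "f2 > 0" and A: "A > 0" and r: "f1 + Q / A * f = 0"
  shows "(- h * f - - A * ((k * A - Q * h) / (A * A) * (f1 * inverse (- ((f2 * f - f1 * f1) / (f * f)))))) / (f * f)
   = inverse ((Q / (- A / f))\<^sup>2 + f2 * (A / (- A / f))) * f2 * h
     + inverse ((Q / (- A / f))\<^sup>2 + f2 * (A / (- A / f))) * (Q / (- A / f)) * k"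
proof -
  define D where "D = (Q * f / A)\<^sup>2 - f2 * f"
  have f1e: "f1 = - (Q * f / A)" using r by (simp add: field_simps)
  have Dp: "D > 0" unfolding D_def using f f2 by (smt (verit) mult_pos_neg zero_le_power2)
  have e1: "(Q / (- A / f))\<^sup>2 + f2 * (A / (- A / f)) = D"
    unfolding D_def using f A by (simp add: field_simps power2_eq_square)
  have e2: "- ((f2 * f - f1 * f1) / (f * f)) = D / (f * f)"
    unfolding D_def f1e using f A by (simp add: field_simps power2_eq_square)
  have e3: "Q / (- A / f) = - (Q * f / A)" using f A by (simp add: field_simps)
  have f2e: "f2 = ((Q * f / A)\<^sup>2 - D) / f" unfolding D_def using f by (simp add: field_simps)
  show ?thesis unfolding e1 e2 e3 unfolding f1e f2e
    using f A Dp by (simp add: field_simps power2_eq_square)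
qed

theorem mainTheorem3:
  fixes zv ce p :: "real^'n" and L :: "real^'n^'n" and \<zeta> :: real
  assumes N2: "CARD('n) \<ge> 2"
    and z_nz: "\<exists>k. zv$k \<noteq> 0"
    and ce_pos: "\<forall>k. ce$k > 0"
    and neutral: "(\<Sum>k\<in>UNIV. zv$k * ce$k) = 0"
    and L_sym: "transpose L = L"
    and L_pd: "\<forall>x. x \<noteq> 0 \<longrightarrow> x \<bullet> (L *v x) > 0"
    and zeta_pos: "\<zeta> > 0"
    and fmin_neg: "fpl zv ce L p (phi_min zv ce L p) < 0"
  defines "DA \<equiv> (\<lambda>A QA. inverse ((QA / vstar zv ce L p A QA)\<^sup>2
             + deriv (deriv (fpl zv ce L p)) (phistar zv ce L p A QA) * (A / vstar zv ce L p A QA))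
             * deriv (deriv (fpl zv ce L p)) (phistar zv ce L p A QA))"
    and "DQ \<equiv> (\<lambda>A QA. inverse ((QA / vstar zv ce L p A QA)\<^sup>2
             + deriv (deriv (fpl zv ce L p)) (phistar zv ce L p A QA) * (A / vstar zv ce L p A QA))
             * (QA / vstar zv ce L p A QA))"
  shows "(\<forall>A QA. A > 0 \<longrightarrow> (\<exists>!s. case s of (c, v, \<phi>) \<Rightarrow> steady_state zv ce L p A (QA / A) c v \<phi>))
    \<and> (\<forall>A QA. A > 0 \<longrightarrow>
          ((\<lambda>(a, q). vstar zv ce L p a q) has_derivative (\<lambda>(h, k). DA A QA * h + DQ A QA * k)) (at (A, QA)))
    \<and> continuous_on ({0<..} \<times> UNIV) (\<lambda>(a, q). DA a q)
    \<and> continuous_on ({0<..} \<times> UNIV) (\<lambda>(a, q). DQ a q)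
    \<and> (\<forall>A QA. A > 0 \<longrightarrow> DA A QA > 0)"
proof -
  define q where "q = matrix_inv L *v p"
  define F where "F = fpl zv ce L p"
  define F1 where "F1 = (\<lambda>\<phi>. \<Sum>k\<in>UNIV. ce$k * (exp (- q$k - zv$k * \<phi>) * (- zv$k)))"
  define F2 where "F2 = (\<lambda>\<phi>. \<Sum>k\<in>UNIV. ce$k * (exp (- q$k - zv$k * \<phi>) * (zv$k * zv$k)))"
  define S where "S = (\<Sum>k\<in>UNIV. ce$k)"
  define cv where "cv = (\<lambda>\<phi>. (\<chi> k. ce$k * exp (- q$k - zv$k * \<phi>)) :: real^'n)"
  have Fq: "F = (\<lambda>\<phi>. \<Sum>k\<in>UNIV. ce$k * (exp (- q$k - zv$k * \<phi>) - 1))"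
    by (simp add: F_def fpl_def q_def fun_eq_iff)
  have Scv: "(\<Sum>k\<in>UNIV. cv \<phi> $ k) = F \<phi> + S" for \<phi>
    by (simp add: Fq S_def cv_def right_diff_distrib sum_subtractf)
  have Zcv: "(\<Sum>k\<in>UNIV. zv$k * cv \<phi> $ k) = - F1 \<phi>" for \<phi>
    by (simp add: F1_def cv_def sum_negf[symmetric] algebra_simps)
  have dF: "(F has_real_derivative F1 \<phi>) (at \<phi>)" for \<phi>
    unfolding Fq F1_def
    by (rule DERIV_sum) (auto intro!: derivative_eq_intros)
  have dF1: "(F1 has_real_derivative F2 \<phi>) (at \<phi>)" for \<phi>
    unfolding F2_def F1_def
    by (rule DERIV_sum) (auto intro!: derivative_eq_intros)
  have S_pos: "S > 0" unfolding S_def using ce_pos by (simp add: sum_pos)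
  obtain j where j: "zv$j \<noteq> 0" using z_nz by blast
  have F2_pos: "F2 \<phi> > 0" for \<phi>
    unfolding F2_def
  proof (rule sum_pos2[where i=j])
    have "zv$j * zv$j > 0" using j by (auto simp add: zero_less_mult_iff linorder_neq_iff)
    thus "0 < ce $ j * (exp (- q $ j - zv $ j * \<phi>) * (zv $ j * zv $ j))"
      using ce_pos by (simp add: mult_pos_pos)
    show "0 \<le> ce $ i * (exp (- q $ i - zv $ i * \<phi>) * (zv $ i * zv $ i))" for i
      using ce_pos[rule_format, of i] by (simp add: mult_nonneg_nonneg less_imp_le)
  qed auto
  have ex_pos: "\<exists>k. zv$k > 0"
  proof (rule ccontr)
    assume "\<not> ?thesis"
    hence le: "\<forall>k. zv$k * ce$k \<le> 0" using ce_pos by (auto intro: mult_nonpos_nonneg less_imp_le simp: not_less)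
    have "(\<Sum>k\<in>UNIV. - (zv$k * ce$k)) = 0" using neutral by (simp add: sum_negf)
    hence "\<forall>k\<in>UNIV. - (zv$k * ce$k) = 0" by (subst (asm) sum_nonneg_eq_0_iff) (use le in auto)
    hence "zv$j * ce$j = 0" by simp
    thus False using j ce_pos[rule_format, of j] by simp
  qed
  have ex_neg: "\<exists>k. zv$k < 0"
  proof (rule ccontr)
    assume "\<not> ?thesis"
    hence le: "\<forall>k. zv$k * ce$k \<ge> 0" using ce_pos by (auto intro: mult_nonneg_nonneg less_imp_le simp: not_less)
    have "\<forall>k\<in>UNIV. (zv$k * ce$k) = 0" using neutral by (subst (asm) sum_nonneg_eq_0_iff) (use le in auto)
    hence "zv$j * ce$j = 0" by simp
    thus False using j ce_pos[rule_format, of j] by simp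
  qed
  have F_nonneg: "F \<phi> \<ge> 0" if "zv$i * \<phi> \<le> - q$i - S / ce$i" for i \<phi>
  proof -
    have ci: "ce$i > 0" using ce_pos by simp
    have "1 + S / ce$i \<le> 1 + (- q$i - zv$i * \<phi>)" using that by simp
    also have "\<dots> \<le> exp (- q$i - zv$i * \<phi>)" by (rule exp_ge_add_one_self)
    finally have "ce$i * exp (- q$i - zv$i * \<phi>) \<ge> ce$i * (1 + S / ce$i)"
      using ci by (simp add: mult_left_mono)
    moreover have "ce$i * (1 + S / ce$i) = ce$i + S" using ci by (simp add: field_simps)
    ultimately have e: "ce$i * exp (- q$i - zv$i * \<phi>) \<ge> S" using ci by linarith
    have "ce$i * exp (- q$i - zv$i * \<phi>) \<le> (\<Sum>k\<in>UNIV. ce$k * exp (- q$k - zv$k * \<phi>))"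
      by (rule member_le_sum) (use ce_pos in \<open>auto intro: mult_nonneg_nonneg less_imp_le\<close>)
    moreover have "F \<phi> = (\<Sum>k\<in>UNIV. ce$k * exp (- q$k - zv$k * \<phi>)) - S"
      by (simp add: Fq S_def right_diff_distrib sum_subtractf)
    ultimately show ?thesis using e by simp
  qed
  define x0 where "x0 = phi_min zv ce L p"
  interpret C: cvx F F1 F2 x0
  proof
    show "(F has_real_derivative F1 x) (at x)" for x by (rule dF)
    show "(F1 has_real_derivative F2 x) (at x)" for x by (rule dF1)
    show "F2 x > 0" for x by (rule F2_pos)
    show "F x0 < 0" using fmin_neg by (simp add: F_def x0_def)
    show "\<exists>l<x0. F l \<ge> 0"
    proof -
      obtain i where i: "zv$i > 0" using ex_pos by blast
      define l where "l = min (x0 - 1) ((- q$i - S / ce$i) / zv$i)"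
      have "zv$i * l \<le> zv$i * ((- q$i - S / ce$i) / zv$i)"
        unfolding l_def using i by (intro mult_left_mono) auto
      hence "zv$i * l \<le> - q$i - S / ce$i" using i by simp
      thus ?thesis using F_nonneg[of i l] by (intro exI[of _ l]) (auto simp: l_def)
    qed
    show "\<exists>r>x0. F r \<ge> 0"
    proof -
      obtain i where i: "zv$i < 0" using ex_neg by blast
      define r where "r = max (x0 + 1) ((- q$i - S / ce$i) / zv$i)"
      have "zv$i * r \<le> zv$i * ((- q$i - S / ce$i) / zv$i)"
        unfolding r_def using i by (intro mult_left_mono_neg) auto
      hence "zv$i * r \<le> - q$i - S / ce$i" using i by simp
      thus ?thesis using F_nonneg[of i r] by (intro exI[of _ r]) (auto simp: r_def)
    qed
  qed
  have ker: "\<forall>x. L *v x = 0 \<longrightarrow> x = 0"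
    using L_pd by (metis inner_zero_right less_irrefl)
  have inv: "invertible L"
    using ker unfolding invertible_left_inverse matrix_left_invertible_ker .
  have LLi: "L ** matrix_inv L = mat 1 \<and> matrix_inv L ** L = mat 1"
    using inv unfolding invertible_def matrix_inv_def by (rule someI_ex)
  have negmv: "M *v (- x) = - (M *v x)" for M :: "real^'n^'n" and x
    using matrix_vector_mult_diff_distrib[of M 0 x] by simp
  have mu_iff: "L *v m + p = 0 \<longleftrightarrow> m = - q" for m
  proof
    assume h: "L *v m + p = 0"
    have "m = matrix_inv L *v (L *v m)"
      using LLi by (simp add: matrix_vector_mul_assoc)
    also have "L *v m = - p" using h by (simp add: eq_neg_iff_add_eq_0)
    finally show "m = - q" unfolding q_def by (simp add: negmv)
  next
    assume "m = - q"
    thus "L *v m + p = 0" unfolding q_def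
      using LLi by (simp add: matrix_vector_mul_assoc negmv)
  qed
  have ss_iff: "steady_state zv ce L p A z c v \<phi> \<longleftrightarrow>
      (c = cv \<phi> \<and> F \<phi> < 0 \<and> F1 \<phi> + z * F \<phi> = 0 \<and> v = - A / F \<phi>)" if A: "A > 0" for A z c v \<phi>
  proof
    assume ss: "steady_state zv ce L p A z c v \<phi>"
    have cpos: "\<forall>k. c$k > 0" and vpos: "v > 0"
      and en: "(\<Sum>k\<in>UNIV. zv$k * c$k) + z * A / v = 0"
      and mu: "L *v mu zv ce c \<phi> + p = 0" and pw: "pi_w ce c A v = 0"
      using ss unfolding steady_state_def by auto
    have "mu zv ce c \<phi> = - q" using mu mu_iff by blast
    hence lnk: "ln (c$k / ce$k) + zv$k * \<phi> = - q$k" for k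
      unfolding mu_def by (metis vec_lambda_beta vector_uminus_component)
    have "c$k = ce$k * exp (- q$k - zv$k * \<phi>)" for k
    proof -
      have "ln (c$k / ce$k) = - q$k - zv$k * \<phi>" using lnk[of k] by simp
      hence "c$k / ce$k = exp (- q$k - zv$k * \<phi>)"
        using cpos ce_pos by (metis divide_pos_pos exp_ln)
      thus ?thesis using ce_pos by (metis less_irrefl nonzero_eq_divide_eq mult.commute)
    qed
    hence cc: "c = cv \<phi>" unfolding cv_def by (simp add: vec_eq_iff)
    have "S - (F \<phi> + S + A / v) = 0" using pw unfolding pi_w_def cc Scv S_def .
    hence Av: "A / v = - F \<phi>" by simp
    have "A / v > 0" using A vpos by simp
    hence Fn: "F \<phi> < 0" using Av by simp
    have "- F1 \<phi> + z * (A / v) = 0" using en unfolding cc Zcv by simp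
    hence "F1 \<phi> + z * F \<phi> = 0" using Av by simp
    moreover have "v = - A / F \<phi>" using Av vpos Fn by (simp add: field_simps)
    ultimately show "c = cv \<phi> \<and> F \<phi> < 0 \<and> F1 \<phi> + z * F \<phi> = 0 \<and> v = - A / F \<phi>"
      using cc Fn by blast
  next
    assume h: "c = cv \<phi> \<and> F \<phi> < 0 \<and> F1 \<phi> + z * F \<phi> = 0 \<and> v = - A / F \<phi>"
    hence cc: "c = cv \<phi>" and Fn: "F \<phi> < 0" and r: "F1 \<phi> + z * F \<phi> = 0"
      and vv: "v = - A / F \<phi>" by auto
    have vpos: "v > 0" using vv Fn A by (simp add: divide_pos_neg)
    have Av: "A / v = - F \<phi>" using vv Fn A vpos by (auto simp: field_simps)
    have cpos: "\<forall>k. c$k > 0" using cc ce_pos by (simp add: cv_def)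
    have "mu zv ce c \<phi> = - q"
      unfolding mu_def cc cv_def using ce_pos
      by (simp add: vec_eq_iff ln_mult) (metis less_irrefl)
    hence mu: "L *v mu zv ce c \<phi> + p = 0" using mu_iff by blast
    have en: "(\<Sum>k\<in>UNIV. zv$k * c$k) + z * A / v = 0"
      using r Av unfolding cc Zcv by (simp add: times_divide_eq_right[symmetric])
    have pw: "pi_w ce c A v = 0" unfolding pi_w_def cc Scv S_def[symmetric] using Av by simp
    show "steady_state zv ce L p A z c v \<phi>"
      unfolding steady_state_def using cpos vpos en mu pw by blast
  qed
  have ex1: "\<forall>A QA. A > 0 \<longrightarrow> (\<exists>!s. case s of (c, v, \<phi>) \<Rightarrow> steady_state zv ce L p A (QA / A) c v \<phi>)"
  proof (intro allI impI)
    fix A QA :: real assume A: "A > 0"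
    let ?z = "QA / A"
    let ?t = "C.Phi ?z"
    show "\<exists>!s. case s of (c, v, \<phi>) \<Rightarrow> steady_state zv ce L p A ?z c v \<phi>"
    proof (rule ex1I[where a="(cv ?t, - A / F ?t, ?t)"])
      show "case (cv ?t, - A / F ?t, ?t) of (c, v, \<phi>) \<Rightarrow> steady_state zv ce L p A ?z c v \<phi>"
        using ss_iff[OF A] C.Phi[of ?z] by simp
      fix s assume sa: "case s of (c, v, \<phi>) \<Rightarrow> steady_state zv ce L p A ?z c v \<phi>"
      obtain c v \<phi> where s: "s = (c, v, \<phi>)" by (cases s) auto
      have "steady_state zv ce L p A ?z c v \<phi>" using sa s by simp
      hence h: "c = cv \<phi> \<and> F \<phi> < 0 \<and> F1 \<phi> + ?z * F \<phi> = 0 \<and> v = - A / F \<phi>"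
        using ss_iff[OF A] by blast
      hence "?t = \<phi>" using C.Phi_eq by blast
      thus "s = (cv ?t, - A / F ?t, ?t)" using s h by simp
    qed
  qed
  have vstar_eq: "vstar zv ce L p A QA = - A / F (C.Phi (QA / A))" if A: "A > 0" for A QA
    unfolding vstar_def
  proof (rule the_equality)
    show "\<exists>c \<phi>. steady_state zv ce L p A (QA / A) c (- A / F (C.Phi (QA / A))) \<phi>"
      using ss_iff[OF A] C.Phi by blast
    fix v assume "\<exists>c \<phi>. steady_state zv ce L p A (QA / A) c v \<phi>"
    then obtain c \<phi> where "steady_state zv ce L p A (QA / A) c v \<phi>" by blast
    hence h: "c = cv \<phi> \<and> F \<phi> < 0 \<and> F1 \<phi> + (QA / A) * F \<phi> = 0 \<and> v = - A / F \<phi>"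
      using ss_iff[OF A] by blast
    hence "C.Phi (QA / A) = \<phi>" using C.Phi_eq by blast
    thus "v = - A / F (C.Phi (QA / A))" using h by simp
  qed
  have phistar_eq: "phistar zv ce L p A QA = C.Phi (QA / A)" if A: "A > 0" for A QA
    unfolding phistar_def
  proof (rule the_equality)
    show "\<exists>c v. steady_state zv ce L p A (QA / A) c v (C.Phi (QA / A))"
      using ss_iff[OF A] C.Phi by blast
    fix \<phi> assume "\<exists>c v. steady_state zv ce L p A (QA / A) c v \<phi>"
    then obtain c v where "steady_state zv ce L p A (QA / A) c v \<phi>" by blast
    hence h: "c = cv \<phi> \<and> F \<phi> < 0 \<and> F1 \<phi> + (QA / A) * F \<phi> = 0 \<and> v = - A / F \<phi>"
      using ss_iff[OF A] by blast
    thus "\<phi> = C.Phi (QA / A)" using C.Phi_eq by metis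
  qed
  have dd: "deriv (deriv (fpl zv ce L p)) = F2"
  proof -
    have "deriv F = F1" using dF by (intro ext DERIV_imp_deriv)
    hence "deriv (deriv F) = F2" using dF1 by (auto intro!: ext DERIV_imp_deriv)
    thus ?thesis by (simp add: F_def)
  qed
  define P where "P = (\<lambda>x::real \<times> real. C.Phi (snd x / fst x))"
  have DA_eq: "DA a b = inverse ((b / (- a / F (C.Phi (b / a))))\<^sup>2 + F2 (C.Phi (b / a)) * (a / (- a / F (C.Phi (b / a))))) * F2 (C.Phi (b / a))"
    if "a > 0" for a b
    unfolding DA_def using that by (simp add: vstar_eq phistar_eq dd)
  have DQ_eq: "DQ a b = inverse ((b / (- a / F (C.Phi (b / a))))\<^sup>2 + F2 (C.Phi (b / a)) * (a / (- a / F (C.Phi (b / a))))) * (b / (- a / F (C.Phi (b / a))))"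
    if "a > 0" for a b
    unfolding DQ_def using that by (simp add: vstar_eq phistar_eq dd)
  have den_pos: "(b / (- a / F (C.Phi (b / a))))\<^sup>2 + F2 (C.Phi (b / a)) * (a / (- a / F (C.Phi (b / a)))) > 0"
    if a: "a > 0" for a b
  proof -
    have fn: "F (C.Phi (b / a)) < 0" using C.Phi by blast
    have "a / (- a / F (C.Phi (b / a))) > 0" using a fn by (simp add: divide_pos_neg)
    hence "F2 (C.Phi (b / a)) * (a / (- a / F (C.Phi (b / a)))) > 0" using F2_pos mult_pos_pos by blast
    thus ?thesis by (smt (verit) zero_le_power2)
  qed
  have DApos: "\<forall>A QA. A > 0 \<longrightarrow> DA A QA > 0"
    using DA_eq den_pos F2_pos by simp
  have der: "((\<lambda>(a, q). vstar zv ce L p a q) has_derivative (\<lambda>(h, k). DA A QA * h + DQ A QA * k)) (at (A, QA))"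
    if A: "A > 0" for A QA
  proof -
    define t where "t = C.Phi (QA / A)"
    have fn: "F t < 0" and r: "F1 t + (QA / A) * F t = 0" using C.Phi unfolding t_def by blast+
    have dG: "((\<lambda>z. F (C.Phi z)) has_real_derivative F1 t * inverse (C.kd t)) (at (snd (A, QA) / fst (A, QA)))"
      using DERIV_chain2[OF dF C.DERIV_Phi] unfolding t_def by simp
    have hq: "((\<lambda>x. snd x / fst x) has_derivative (\<lambda>h. (snd h * A - QA * fst h) / (A * A))) (at (A, QA))"
      using has_derivative_divide'[OF has_derivative_snd[OF has_derivative_ident]
          has_derivative_fst[OF has_derivative_ident], of "(A, QA)" UNIV] A by simp
    have hG: "((\<lambda>x. F (C.Phi (snd x / fst x))) has_derivative
        (\<lambda>h. (snd h * A - QA * fst h) / (A * A) * (F1 t * inverse (C.kd t)))) (at (A, QA))"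
      by (rule DERIV_compose_FDERIV[OF dG hq])
    have hV: "((\<lambda>x. - fst x / F (C.Phi (snd x / fst x))) has_derivative
        (\<lambda>h. (- fst h * F t - - A * ((snd h * A - QA * fst h) / (A * A) * (F1 t * inverse (C.kd t)))) / (F t * F t))) (at (A, QA))"
      using has_derivative_divide'[OF has_derivative_minus[OF has_derivative_fst[OF has_derivative_ident]] hG] fn
      unfolding t_def by simp
    have eqd: "(\<lambda>h. (- fst h * F t - - A * ((snd h * A - QA * fst h) / (A * A) * (F1 t * inverse (C.kd t)))) / (F t * F t))
       = (\<lambda>(h, k). DA A QA * h + DQ A QA * k)"
    proof (rule ext, clarify)
      fix h k :: real
      show "(- fst (h, k) * F t - - A * ((snd (h, k) * A - QA * fst (h, k)) / (A * A) * (F1 t * inverse (C.kd t)))) / (F t * F t)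
          = DA A QA * h + DQ A QA * k"
        unfolding DA_eq[OF A] DQ_eq[OF A] t_def[symmetric] C.kd_def
        using alg[OF fn F2_pos[of t] A r, of h k] by simp
    qed
    have hV': "((\<lambda>x. - fst x / F (C.Phi (snd x / fst x))) has_derivative
        (\<lambda>(h, k). DA A QA * h + DQ A QA * k)) (at (A, QA))"
      using hV unfolding eqd .
    show ?thesis
    proof (rule has_derivative_transform_within_open[OF hV', where s="{x. fst x > 0}"])
      show "open {x :: real \<times> real. fst x > 0}"
        by (rule open_Collect_less) (auto intro: continuous_intros)
      show "(A, QA) \<in> {x. fst x > 0}" using A by simp
      show "- fst x / F (C.Phi (snd x / fst x)) = (case x of (a, q) \<Rightarrow> vstar zv ce L p a q)"
        if "x \<in> {x. fst x > 0}" for x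
        using that vstar_eq by (cases x) auto
    qed
  qed
  let ?U = "{0::real<..} \<times> (UNIV :: real set)"
  have contPhi: "continuous_on UNIV C.Phi"
    using C.isCont_Phi by (simp add: continuous_at_imp_continuous_on)
  have contP: "continuous_on ?U (\<lambda>x. C.Phi (snd x / fst x))"
    by (rule continuous_on_compose2[OF contPhi]) (auto intro!: continuous_intros)
  have contFP: "continuous_on ?U (\<lambda>x. F (C.Phi (snd x / fst x)))"
    by (rule continuous_on_compose2[OF C.contf2 contP]) auto
  have contF2: "continuous_on UNIV F2"
    unfolding F2_def by (intro continuous_intros)
  have contF2P: "continuous_on ?U (\<lambda>x. F2 (C.Phi (snd x / fst x)))"
    by (rule continuous_on_compose2[OF contF2 contP]) auto
  have FPn: "F (C.Phi (snd x / fst x)) \<noteq> 0" for x using C.Phi by (metis less_irrefl)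
  have s0: "\<forall>x\<in>?U. fst x \<noteq> 0" by (auto simp: less_irrefl)
  have s1: "\<forall>x\<in>?U. F (C.Phi (snd x / fst x)) \<noteq> 0" using FPn by blast
  have s2: "\<forall>x\<in>?U. - fst x / F (C.Phi (snd x / fst x)) \<noteq> 0" using FPn by auto
  have s3: "\<forall>x\<in>?U. (snd x / (- fst x / F (C.Phi (snd x / fst x))))\<^sup>2 +
           F2 (C.Phi (snd x / fst x)) * (fst x / (- fst x / F (C.Phi (snd x / fst x)))) \<noteq> 0"
  proof
    fix x assume "x \<in> ?U"
    hence "fst x > 0" by auto
    from den_pos[OF this, of "snd x"] show "(snd x / (- fst x / F (C.Phi (snd x / fst x))))\<^sup>2 +
           F2 (C.Phi (snd x / fst x)) * (fst x / (- fst x / F (C.Phi (snd x / fst x)))) \<noteq> 0"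
      by (metis less_irrefl)
  qed
  have contDA: "continuous_on ?U (\<lambda>(a, q). DA a q)"
  proof -
    have "continuous_on ?U (\<lambda>x. inverse ((snd x / (- fst x / F (C.Phi (snd x / fst x))))\<^sup>2
       + F2 (C.Phi (snd x / fst x)) * (fst x / (- fst x / F (C.Phi (snd x / fst x))))) * F2 (C.Phi (snd x / fst x)))"
      by (intro continuous_intros contFP contF2P s0 s1 s2 s3)
    thus ?thesis
      by (rule continuous_on_cong[THEN iffD1, rotated -1]) (auto simp: DA_eq)
  qed
  have contDQ: "continuous_on ?U (\<lambda>(a, q). DQ a q)"
  proof -
    have "continuous_on ?U (\<lambda>x. inverse ((snd x / (- fst x / F (C.Phi (snd x / fst x))))\<^sup>2
       + F2 (C.Phi (snd x / fst x)) * (fst x / (- fst x / F (C.Phi (snd x / fst x))))) * (snd x / (- fst x / F (C.Phi (snd x / fst x)))))"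
      by (intro continuous_intros contFP contF2P s0 s1 s2 s3)
    thus ?thesis
      by (rule continuous_on_cong[THEN iffD1, rotated -1]) (auto simp: DQ_eq)
  qed
  show ?thesis using ex1 der contDA contDQ DApos by blast
qed

end
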